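(* Let $a,b,c$ be nonnegative integers with $a+b+c=n$ and suppose $\gcd(a+b,b+c)=1$. Then in the meander graph $M=M(a,b,c\mid n)$ there are exactly two vertices of degree $1$, and every other vertex has degree $2$.
   Context: For compositions $\underline x=(a_1,\ldots,a_m)$, $\underline y=(b_1,\ldots,b_t)$ of $n$ (nonnegative integers summing to $n$), the meander $M(\underline x\mid\underline y)$ is the graph on vertices $1,\ldots,n$ whose edges are: for each part $a_k$ with $s=a_1+\cdots+a_{k-1}$, the top edges $\{s+j,\,s+a_k+1-j\}$ for $1\le j\le\lfloor a_k/2\rfloor$; and for each part $b_k$ with $s=b_1+\cdots+b_{k-1}$, the bottom edges $\{s+j,\,s+b_k+1-j\}$ for $1\le j\le\lfloor b_k/2\rfloor$. Here $\underline x=(a,b,c)$ and $\underline y=(n)$. *)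

theory Defs
  imports Main
begin

definition part_edges :: "nat \<Rightarrow> nat \<Rightarrow> nat set set" where
  "part_edges s k = {{s + j, s + k + 1 - j} | j. 1 \<le> j \<and> j \<le> k div 2}"

definition comp_edges :: "nat list \<Rightarrow> nat set set" where
  "comp_edges xs = (\<Union>k<length xs. part_edges (sum_list (take k xs)) (xs ! k))"

text \<open>Degree of vertex v in the meander M(xs | ys): top arcs plus bottom arcs through v
  (a top arc and a bottom arc joining the same pair are counted separately).\<close>
definition meander_degree :: "nat list \<Rightarrow> nat list \<Rightarrow> nat \<Rightarrow> nat" where
  "meander_degree xs ys v =
     card {e \<in> comp_edges xs. v \<in> e} + card {e \<in> comp_edges ys. v \<in> e}"

end

theory Submission
  imports Defs
begin

lemma pe_set: "{e \<in> part_edges s k. v \<in> e} =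
  (if s < v \<and> v \<le> s+k \<and> \<not>(odd k \<and> 2*(v-s) = k+1) then {{v, 2*s+k+1-v}} else {})"
proof (cases "s < v \<and> v \<le> s+k \<and> \<not>(odd k \<and> 2*(v-s) = k+1)")
  case True
  show ?thesis
  proof (rule set_eqI, rule iffI)
    fix e assume "e \<in> {e \<in> part_edges s k. v \<in> e}"
    then obtain j where j: "e = {s+j, s+k+1-j}" "1 \<le> j" "j \<le> k div 2" "v \<in> e"
      unfolding part_edges_def by blast
    have "v = s+j \<or> v = s+k+1-j" using j by auto
    then have "e = {v, 2*s+k+1-v}" using j by (auto simp: insert_commute)
    then show "e \<in> (if s < v \<and> v \<le> s+k \<and> \<not>(odd k \<and> 2*(v-s) = k+1) then {{v, 2*s+k+1-v}} else {})"
      using True by simp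
  next
    fix e assume "e \<in> (if s < v \<and> v \<le> s+k \<and> \<not>(odd k \<and> 2*(v-s) = k+1) then {{v, 2*s+k+1-v}} else {})"
    then have e: "e = {v, 2*s+k+1-v}" using True by simp
    show "e \<in> {e \<in> part_edges s k. v \<in> e}"
    proof (cases "2*(v-s) \<le> k")
      case c: True
      have "e = {s + (v-s), s+k+1-(v-s)}" using e True by auto
      moreover have "1 \<le> v-s" "v-s \<le> k div 2" using True c by auto
      ultimately show ?thesis unfolding part_edges_def using e by blast
    next
      case c: False
      have "e = {s + (s+k+1-v), s+k+1-(s+k+1-v)}" using e True by (auto simp: insert_commute)
      moreover have "1 \<le> s+k+1-v" "s+k+1-v \<le> k div 2" using True c by auto
      ultimately show ?thesis unfolding part_edges_def using e by blast
    qed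
  qed
next
  case False
  have "{e \<in> part_edges s k. v \<in> e} = {}"
  proof (rule ccontr)
    assume "{e \<in> part_edges s k. v \<in> e} \<noteq> {}"
    then obtain j where j: "1 \<le> j" "j \<le> k div 2" "v = s+j \<or> v = s+k+1-j"
      unfolding part_edges_def by blast
    then show False using False by auto
  qed
  then show ?thesis unfolding if_not_P[OF False] .
qed

lemma ce3: "comp_edges [a,b,c] = part_edges 0 a \<union> part_edges a b \<union> part_edges (a+b) c"
  unfolding comp_edges_def by (auto simp: lessThan_Suc numeral_3_eq_3)

lemma ce1: "comp_edges [n] = part_edges 0 n"
  unfolding comp_edges_def by auto

lemma deg: assumes "1 \<le> v" "v \<le> a+b+c"
  shows "meander_degree [a,b,c] [a+b+c] v =
   (if v \<le> a then (if odd a \<and> 2*v = a+1 then 0 else 1)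
    else if v \<le> a+b then (if odd b \<and> 2*(v-a) = b+1 then 0 else 1)
    else (if odd c \<and> 2*(v-a-b) = c+1 then 0 else 1))
   + (if odd (a+b+c) \<and> 2*v = a+b+c+1 then 0 else 1)"
proof -
  have t: "{e \<in> comp_edges [a,b,c]. v \<in> e} = {e \<in> part_edges 0 a. v \<in> e} \<union> {e \<in> part_edges a b. v \<in> e} \<union> {e \<in> part_edges (a+b) c. v \<in> e}"
    unfolding ce3 by blast
  show ?thesis
    unfolding meander_degree_def t ce1 pe_set using assms by auto
qed

definition fdeg :: "nat \<Rightarrow> nat \<Rightarrow> nat \<Rightarrow> nat \<Rightarrow> nat" where
 "fdeg a b c v =
   (if v \<le> a then (if odd a \<and> 2*v = a+1 then 0 else 1)
    else if v \<le> a+b then (if odd b \<and> 2*(v-a) = b+1 then 0 else 1)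
    else (if odd c \<and> 2*(v-a-b) = c+1 then 0 else 1))
   + (if odd (a+b+c) \<and> 2*v = a+b+c+1 then 0 else 1)"

lemma two_set: "x \<noteq> y \<Longrightarrow> S = {x,y} \<Longrightarrow> card S = 2" by simp

lemma case_A:
  fixes a b c p q r :: nat
  assumes H: "a=2*p+1" "b=2*q" "c=2*r" and X: "b+c \<noteq> 0"
  shows "card {v \<in> {1..a+b+c}. fdeg a b c v = 1} = 2
     \<and> (\<forall>v \<in> {1..a+b+c}. fdeg a b c v \<noteq> 1 \<longrightarrow> fdeg a b c v = 2)"
proof -
  have S: "{v \<in> {1..a+b+c}. fdeg a b c v = 1} = {p+1, p+q+r+1}"
  proof (rule set_eqI)
    fix v
    show "v \<in> {v \<in> {1..a+b+c}. fdeg a b c v = 1} \<longleftrightarrow> v \<in> {p+1, p+q+r+1}"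
      using H X by (cases "v \<le> a"; cases "v \<le> a+b"; simp add: fdeg_def; arith)
  qed
  have T: "\<forall>v \<in> {1..a+b+c}. fdeg a b c v \<noteq> 1 \<longrightarrow> fdeg a b c v = 2"
  proof
    fix v assume "v \<in> {1..a+b+c}"
    then show "fdeg a b c v \<noteq> 1 \<longrightarrow> fdeg a b c v = 2"
      using H X by (cases "v \<le> a"; cases "v \<le> a+b"; simp add: fdeg_def; arith)
  qed
  have "p+1 \<noteq> p+q+r+1" using H X by linarith
  then show ?thesis using S T by simp
qed

lemma case_B:
  fixes a b c p q r :: nat
  assumes H: "a=2*p" "b=2*q+1" "c=2*r" and X: "p \<noteq> r"
  shows "card {v \<in> {1..a+b+c}. fdeg a b c v = 1} = 2
     \<and> (\<forall>v \<in> {1..a+b+c}. fdeg a b c v \<noteq> 1 \<longrightarrow> fdeg a b c v = 2)"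
proof -
  have S: "{v \<in> {1..a+b+c}. fdeg a b c v = 1} = {a+q+1, p+q+r+1}"
  proof (rule set_eqI)
    fix v
    show "v \<in> {v \<in> {1..a+b+c}. fdeg a b c v = 1} \<longleftrightarrow> v \<in> {a+q+1, p+q+r+1}"
      using H X by (cases "v \<le> a"; cases "v \<le> a+b"; simp add: fdeg_def; arith)
  qed
  have T: "\<forall>v \<in> {1..a+b+c}. fdeg a b c v \<noteq> 1 \<longrightarrow> fdeg a b c v = 2"
  proof
    fix v assume "v \<in> {1..a+b+c}"
    then show "fdeg a b c v \<noteq> 1 \<longrightarrow> fdeg a b c v = 2"
      using H X by (cases "v \<le> a"; cases "v \<le> a+b"; simp add: fdeg_def; arith)
  qed
  have "a+q+1 \<noteq> p+q+r+1" using H X by linarith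
  then show ?thesis using S T by simp
qed

lemma case_C:
  fixes a b c p q r :: nat
  assumes H: "a=2*p" "b=2*q" "c=2*r+1" and X: "a+b \<noteq> 0"
  shows "card {v \<in> {1..a+b+c}. fdeg a b c v = 1} = 2
     \<and> (\<forall>v \<in> {1..a+b+c}. fdeg a b c v \<noteq> 1 \<longrightarrow> fdeg a b c v = 2)"
proof -
  have S: "{v \<in> {1..a+b+c}. fdeg a b c v = 1} = {a+b+r+1, p+q+r+1}"
  proof (rule set_eqI)
    fix v
    show "v \<in> {v \<in> {1..a+b+c}. fdeg a b c v = 1} \<longleftrightarrow> v \<in> {a+b+r+1, p+q+r+1}"
      using H X by (cases "v \<le> a"; cases "v \<le> a+b"; simp add: fdeg_def; arith)
  qed
  have T: "\<forall>v \<in> {1..a+b+c}. fdeg a b c v \<noteq> 1 \<longrightarrow> fdeg a b c v = 2"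
  proof
    fix v assume "v \<in> {1..a+b+c}"
    then show "fdeg a b c v \<noteq> 1 \<longrightarrow> fdeg a b c v = 2"
      using H X by (cases "v \<le> a"; cases "v \<le> a+b"; simp add: fdeg_def; arith)
  qed
  have "a+b+r+1 \<noteq> p+q+r+1" using H X by linarith
  then show ?thesis using S T by simp
qed

lemma case_AB:
  fixes a b c p q r :: nat
  assumes H: "a=2*p+1" "b=2*q+1" "c=2*r" and X: "True"
  shows "card {v \<in> {1..a+b+c}. fdeg a b c v = 1} = 2
     \<and> (\<forall>v \<in> {1..a+b+c}. fdeg a b c v \<noteq> 1 \<longrightarrow> fdeg a b c v = 2)"
proof -
  have S: "{v \<in> {1..a+b+c}. fdeg a b c v = 1} = {p+1, a+q+1}"
  proof (rule set_eqI)
    fix v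
    show "v \<in> {v \<in> {1..a+b+c}. fdeg a b c v = 1} \<longleftrightarrow> v \<in> {p+1, a+q+1}"
      using H X by (cases "v \<le> a"; cases "v \<le> a+b"; simp add: fdeg_def; arith)
  qed
  have T: "\<forall>v \<in> {1..a+b+c}. fdeg a b c v \<noteq> 1 \<longrightarrow> fdeg a b c v = 2"
  proof
    fix v assume "v \<in> {1..a+b+c}"
    then show "fdeg a b c v \<noteq> 1 \<longrightarrow> fdeg a b c v = 2"
      using H X by (cases "v \<le> a"; cases "v \<le> a+b"; simp add: fdeg_def; arith)
  qed
  have "p+1 \<noteq> a+q+1" using H X by linarith
  then show ?thesis using S T by simp
qed

lemma case_AC:
  fixes a b c p q r :: nat
  assumes H: "a=2*p+1" "b=2*q" "c=2*r+1" and X: "True"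
  shows "card {v \<in> {1..a+b+c}. fdeg a b c v = 1} = 2
     \<and> (\<forall>v \<in> {1..a+b+c}. fdeg a b c v \<noteq> 1 \<longrightarrow> fdeg a b c v = 2)"
proof -
  have S: "{v \<in> {1..a+b+c}. fdeg a b c v = 1} = {p+1, a+b+r+1}"
  proof (rule set_eqI)
    fix v
    show "v \<in> {v \<in> {1..a+b+c}. fdeg a b c v = 1} \<longleftrightarrow> v \<in> {p+1, a+b+r+1}"
      using H X by (cases "v \<le> a"; cases "v \<le> a+b"; simp add: fdeg_def; arith)
  qed
  have T: "\<forall>v \<in> {1..a+b+c}. fdeg a b c v \<noteq> 1 \<longrightarrow> fdeg a b c v = 2"
  proof
    fix v assume "v \<in> {1..a+b+c}"
    then show "fdeg a b c v \<noteq> 1 \<longrightarrow> fdeg a b c v = 2"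
      using H X by (cases "v \<le> a"; cases "v \<le> a+b"; simp add: fdeg_def; arith)
  qed
  have "p+1 \<noteq> a+b+r+1" using H X by linarith
  then show ?thesis using S T by simp
qed

lemma case_BC:
  fixes a b c p q r :: nat
  assumes H: "a=2*p" "b=2*q+1" "c=2*r+1" and X: "True"
  shows "card {v \<in> {1..a+b+c}. fdeg a b c v = 1} = 2
     \<and> (\<forall>v \<in> {1..a+b+c}. fdeg a b c v \<noteq> 1 \<longrightarrow> fdeg a b c v = 2)"
proof -
  have S: "{v \<in> {1..a+b+c}. fdeg a b c v = 1} = {a+q+1, a+b+r+1}"
  proof (rule set_eqI)
    fix v
    show "v \<in> {v \<in> {1..a+b+c}. fdeg a b c v = 1} \<longleftrightarrow> v \<in> {a+q+1, a+b+r+1}"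
      using H X by (cases "v \<le> a"; cases "v \<le> a+b"; simp add: fdeg_def; arith)
  qed
  have T: "\<forall>v \<in> {1..a+b+c}. fdeg a b c v \<noteq> 1 \<longrightarrow> fdeg a b c v = 2"
  proof
    fix v assume "v \<in> {1..a+b+c}"
    then show "fdeg a b c v \<noteq> 1 \<longrightarrow> fdeg a b c v = 2"
      using H X by (cases "v \<le> a"; cases "v \<le> a+b"; simp add: fdeg_def; arith)
  qed
  have "a+q+1 \<noteq> a+b+r+1" using H X by linarith
  then show ?thesis using S T by simp
qed

lemma main:
  fixes a b c :: nat
  assumes n2: "a+b+c \<ge> 2" and g1: "\<not>(even (a+b) \<and> even (b+c))"
    and ab: "a+b \<noteq> 0" and bc: "b+c \<noteq> 0" and ac: "a = c \<Longrightarrow> a+b = 1"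
  shows "card {v \<in> {1..a+b+c}. fdeg a b c v = 1} = 2
     \<and> (\<forall>v \<in> {1..a+b+c}. fdeg a b c v \<noteq> 1 \<longrightarrow> fdeg a b c v = 2)"
proof -
  consider (A) p q r where "a=2*p+1" "b=2*q" "c=2*r"
    | (B) p q r where "a=2*p" "b=2*q+1" "c=2*r"
    | (C) p q r where "a=2*p" "b=2*q" "c=2*r+1"
    | (AB) p q r where "a=2*p+1" "b=2*q+1" "c=2*r"
    | (AC) p q r where "a=2*p+1" "b=2*q" "c=2*r+1"
    | (BC) p q r where "a=2*p" "b=2*q+1" "c=2*r+1"
  proof -
    define p q r where "p = a div 2" and "q = b div 2" and "r = c div 2"
    have ha: "a = 2*p + a mod 2" and hb: "b = 2*q + b mod 2" and hc: "c = 2*r + c mod 2"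
      unfolding p_def q_def r_def by simp_all
    have ma: "a mod 2 = 0 \<or> a mod 2 = 1" and mb: "b mod 2 = 0 \<or> b mod 2 = 1"
      and mc: "c mod 2 = 0 \<or> c mod 2 = 1" by auto
    have g: "\<not>(a mod 2 = b mod 2 \<and> b mod 2 = c mod 2)" using g1 by presburger
    show thesis
    proof (cases "a mod 2 = 0")
      case a0: True
      show thesis
      proof (cases "b mod 2 = 0")
        case b0: True
        then have c1: "c mod 2 = 1" using g a0 mc by auto
        show thesis by (rule that(3)[of p q r]) (use ha hb hc a0 b0 c1 in simp_all)
      next
        case b1: False
        then have b1: "b mod 2 = 1" using mb by auto
        show thesis
        proof (cases "c mod 2 = 0")
          case c0: True
          show thesis by (rule that(2)[of p q r]) (use ha hb hc a0 b1 c0 in simp_all)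
        next
          case False
          then have c1: "c mod 2 = 1" using mc by auto
          show thesis by (rule that(6)[of p q r]) (use ha hb hc a0 b1 c1 in simp_all)
        qed
      qed
    next
      case False
      then have a1: "a mod 2 = 1" using ma by auto
      show thesis
      proof (cases "b mod 2 = 0")
        case b0: True
        show thesis
        proof (cases "c mod 2 = 0")
          case c0: True
          show thesis by (rule that(1)[of p q r]) (use ha hb hc a1 b0 c0 in simp_all)
        next
          case False
          then have c1: "c mod 2 = 1" using mc by auto
          show thesis by (rule that(5)[of p q r]) (use ha hb hc a1 b0 c1 in simp_all)
        qed
      next
        case False
        then have b1: "b mod 2 = 1" using mb by auto
        then have c0: "c mod 2 = 0" using g a1 mc by auto
        show thesis by (rule that(4)[of p q r]) (use ha hb hc a1 b1 c0 in simp_all)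
      qed
    qed
  qed
  then show ?thesis
  proof cases
    case A then show ?thesis using case_A bc by blast
  next
    case B
    have pr: "p \<noteq> r"
    proof
      assume pr: "p = r"
      then have "a = c" using B by simp
      then have "a+b = 1" by (rule ac)
      then show False using B n2 pr by linarith
    qed
    then show ?thesis using case_B B by blast
  next
    case C then show ?thesis using case_C ab by blast
  next
    case AB then show ?thesis using case_AB by blast
  next
    case AC then show ?thesis using case_AC by blast
  next
    case BC then show ?thesis using case_BC by blast
  qed
qed

theorem lemma4p11:
  fixes a b c n :: nat
  assumes "a + b + c = n" and "n \<ge> 2" and "gcd (a + b) (b + c) = 1"
  shows "card {v \<in> {1..n}. meander_degree [a, b, c] [n] v = 1} = 2
       \<and> (\<forall>v \<in> {1..n}. meander_degree [a, b, c] [n] v \<noteq> 1 \<longrightarrow>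
              meander_degree [a, b, c] [n] v = 2)"
proof -
  have g1: "\<not>(even (a+b) \<and> even (b+c))"
  proof
    assume "even (a+b) \<and> even (b+c)"
    then have "2 dvd gcd (a+b) (b+c)" by simp
    then show False using assms(3) by simp
  qed
  have ab: "a+b \<noteq> 0"
  proof
    assume h: "a+b = 0"
    hence "gcd (a+b) (b+c) = n" using assms(1) by simp
    thus False using assms(2,3) by simp
  qed
  have bc: "b+c \<noteq> 0"
  proof
    assume h: "b+c = 0"
    hence "gcd (a+b) (b+c) = n" using assms(1) by simp
    thus False using assms(2,3) by simp
  qed
  have ac: "a+b = 1" if "a = c"
  proof -
    have "gcd (a+b) (b+c) = a+b" using that by (simp add: add.commute)
    thus ?thesis using assms(3) by simp
  qed
  have D: "meander_degree [a, b, c] [n] v = fdeg a b c v" if "v \<in> {1..n}" for v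
    using deg[of v a b c] that assms(1) unfolding fdeg_def by simp
  have eq: "{v \<in> {1..n}. meander_degree [a, b, c] [n] v = 1} = {v \<in> {1..a+b+c}. fdeg a b c v = 1}"
    using D assms(1) by auto
  have M: "card {v \<in> {1..a+b+c}. fdeg a b c v = 1} = 2
     \<and> (\<forall>v \<in> {1..a+b+c}. fdeg a b c v \<noteq> 1 \<longrightarrow> fdeg a b c v = 2)"
    using main[OF _ g1 ab bc ac] assms(1,2) by simp
  show ?thesis using M D eq assms(1) by simp
qed

end
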